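(* Fix $\theta$. Suppose the predictions are stable in the sense that $\sqrt{K\,\mathrm{Var}(\nabla\ell_\theta(X,f^{(1)}(X))-\nabla\ell_\theta(X,\bar f(X))\mid f^{(1)})}\xrightarrow{L^1}0$ entrywise as $n\to\infty$. For $j\in[K]$ define $$\tilde L_j=\frac{1}{\sqrt N}\sum_{i=1}^N\Big(\nabla\ell_\theta(\tilde X_i,f^{(j)}(\tilde X_i))-\mathbb{E}_X[\nabla\ell_\theta(X,f^{(j)}(X))]-\big(\nabla\ell_\theta(\tilde X_i,\bar f(\tilde X_i))-\mathbb{E}[\nabla\ell_\theta(X,\bar f(X))]\big)\Big).$$ Then $\frac1K\sum_{j=1}^K\tilde L_j\xrightarrow{p}0$.
   Context: Setting: $(X_i,Y_i)_{i\le n}$ i.i.d. from $\mathbb{P}$; $\tilde X_1,\dots,\tilde X_N$ i.i.d. from the feature marginal, independent of labeled data; $X$ is an independent generic feature draw. $\ell_\theta(x,y)$ is a loss differentiable in $\theta\in\mathbb{R}^d$, $\nabla$ denotes the gradient in $\theta$. Folds $I_1,\dots,I_K$ are consecutive blocks of size $n/K$; $f^{(j)}$ is trained by a possibly randomized algorithm on $\{(X_i,Y_i)\}_{i\notin I_j}$; $\bar f(x)=\mathbb{E}[f^{(1)}(x)]$. $\mathbb{E}_X$ denotes expectation over the independent $X$ conditionally on everything else; $\mathrm{Var}(\cdot\mid f^{(1)})$ is the conditional covariance matrix. Second moments are finite. *)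

theory Defs
  imports "HOL-Probability.Probability"
begin

definition grad :: "(real^'d \<Rightarrow> 'x \<Rightarrow> 'y \<Rightarrow> real) \<Rightarrow> real^'d \<Rightarrow> 'x \<Rightarrow> 'y \<Rightarrow> real^'d" where
  "grad l th x y = (THE g. GDERIV (\<lambda>t. l t x y) th :> g)"

text \<open>Training data for fold j (folds j = 1..k are consecutive blocks of size n div k of the
  indices 0..<n): the labeled data with block I_j removed, re-indexed in order as 0..<n - n div k.\<close>
definition fold_train :: "nat \<Rightarrow> nat \<Rightarrow> nat \<Rightarrow> (nat \<Rightarrow> 'a) \<Rightarrow> nat \<Rightarrow> 'a" where
  "fold_train n k j d = (\<lambda>i. if i < n - n div k
      then d (if i < (j - 1) * (n div k) then i else i + n div k) else undefined)"

text \<open>Space of (algorithm randomness, labeled sample of size n).\<close>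
definition train_space :: "'r measure \<Rightarrow> ('x \<times> 'y) measure \<Rightarrow> nat \<Rightarrow> ('r \<times> (nat \<Rightarrow> 'x \<times> 'y)) measure" where
  "train_space R P n = R \<Otimes>\<^sub>M PiM {..<n} (\<lambda>_. P)"

definition feat :: "('x \<times> 'y) measure \<Rightarrow> 'x measure \<Rightarrow> 'x measure" where
  "feat P SX = distr P SX fst"

definition full_space :: "'r measure \<Rightarrow> ('x \<times> 'y) measure \<Rightarrow> 'x measure \<Rightarrow> nat \<Rightarrow> nat
    \<Rightarrow> (('r \<times> (nat \<Rightarrow> 'x \<times> 'y)) \<times> (nat \<Rightarrow> 'x)) measure" where
  "full_space R P SX N n = train_space R P n \<Otimes>\<^sub>M PiM {..<N} (\<lambda>_. feat P SX)"

definition fpred :: "('r \<Rightarrow> (nat \<Rightarrow> 'x \<times> 'y) \<Rightarrow> 'x \<Rightarrow> 'y) \<Rightarrow> nat \<Rightarrow> nat \<Rightarrow> nat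
    \<Rightarrow> 'r \<times> (nat \<Rightarrow> 'x \<times> 'y) \<Rightarrow> 'x \<Rightarrow> 'y" where
  "fpred A n k j w = A (fst w) (fold_train n k j (snd w))"

definition fbar :: "('r \<times> (nat \<Rightarrow> 'x \<times> 'y)) measure \<Rightarrow> ('r \<times> (nat \<Rightarrow> 'x \<times> 'y) \<Rightarrow> 'x \<Rightarrow> 'y::euclidean_space)
    \<Rightarrow> 'x \<Rightarrow> 'y" where
  "fbar T f x = (\<integral>w. f w x \<partial>T)"

definition condvar :: "'x measure \<Rightarrow> ('x \<Rightarrow> 'y \<Rightarrow> real^'d) \<Rightarrow> ('x \<Rightarrow> 'y) \<Rightarrow> ('x \<Rightarrow> 'y) \<Rightarrow> 'd \<Rightarrow> real" where
  "condvar PX G f fb c =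
     (\<integral>x. ((G x (f x) - G x (fb x)) $ c)\<^sup>2 \<partial>PX) - (\<integral>x. (G x (f x) - G x (fb x)) $ c \<partial>PX)\<^sup>2"

definition Ltil :: "'x measure \<Rightarrow> ('x \<Rightarrow> 'y \<Rightarrow> real^'d) \<Rightarrow> nat \<Rightarrow> ('x \<Rightarrow> 'y) \<Rightarrow> ('x \<Rightarrow> 'y)
    \<Rightarrow> (nat \<Rightarrow> 'x) \<Rightarrow> real^'d" where
  "Ltil PX G N f fb u = (1 / sqrt (real N)) *\<^sub>R
     (\<Sum>i<N. (G (u i) (f (u i)) - (\<integral>x. G x (f x) \<partial>PX))
             - (G (u i) (fb (u i)) - (\<integral>x. G x (fb x) \<partial>PX)))"

end

theory Submission
  imports Defs
begin



lemma fold_train_restrict: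
  "fold_train n k j d = restrict (\<lambda>i. d (if i < (j-1)*(n div k) then i else i + n div k)) {..<n - n div k}"
  by (auto simp: fold_train_def restrict_def fun_eq_iff)

lemma fold_inj: "inj_on (\<lambda>i::nat. if i < (j-1)*m then i else i+m) S"
  by (auto simp: inj_on_def split: if_splits)

lemma fold_maps: "m \<le> n \<Longrightarrow> (\<lambda>i::nat. if i < (j-1)*m then i else i+m) \<in> {..<n-m} \<rightarrow> {..<n}"
  by auto

lemma fold_meas[measurable]:
  "fold_train n k j \<in> measurable (PiM {..<n} (\<lambda>_. P)) (PiM {..<n - n div k} (\<lambda>_. P))"
  unfolding fold_train_restrict
  apply (rule measurable_restrict)
  apply (rule measurable_component_singleton)
  by auto

lemma distr_fold:
  assumes "prob_space P"
  shows "distr (PiM {..<n} (\<lambda>_. P)) (PiM {..<n - n div k} (\<lambda>_. P)) (fold_train n k j) = PiM {..<n - n div k} (\<lambda>_. P)"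
proof -
  have "distr (PiM {..<n} (\<lambda>_. P)) (\<Pi>\<^sub>M i\<in>{..<n - n div k}. (\<lambda>_. P) ((\<lambda>i::nat. if i < (j-1)*(n div k) then i else i+(n div k)) i))
     (\<lambda>\<omega>. \<lambda>i\<in>{..<n - n div k}. \<omega> ((\<lambda>i::nat. if i < (j-1)*(n div k) then i else i+(n div k)) i)) = 
     (\<Pi>\<^sub>M i\<in>{..<n - n div k}. (\<lambda>_. P) ((\<lambda>i::nat. if i < (j-1)*(n div k) then i else i+(n div k)) i))"
    by (rule distr_PiM_reindex) (auto simp: assms inj_on_def split: if_splits)
  then show ?thesis unfolding fold_train_restrict by simp
qed

lemma distr_fold_T:
  assumes "prob_space P" "prob_space R"
  shows "distr (train_space R P n) (R \<Otimes>\<^sub>M PiM {..<n - n div k} (\<lambda>_. P)) (\<lambda>w. (fst w, fold_train n k j (snd w)))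
       = R \<Otimes>\<^sub>M PiM {..<n - n div k} (\<lambda>_. P)"
proof -
  interpret P: prob_space "PiM {..<n - n div k} (\<lambda>_. P)" by (rule prob_space_PiM) (use assms in auto)
  have "distr R R (\<lambda>x. x) \<Otimes>\<^sub>M distr (PiM {..<n} (\<lambda>_. P)) (PiM {..<n - n div k} (\<lambda>_. P)) (fold_train n k j)
    = distr (train_space R P n) (R \<Otimes>\<^sub>M PiM {..<n - n div k} (\<lambda>_. P)) (\<lambda>(x, y). (x, fold_train n k j y))"
    unfolding train_space_def
    by (rule pair_measure_distr) (auto simp: distr_fold assms P.sigma_finite_measure_axioms)
  then show ?thesis by (simp add: distr_fold assms split_beta')
qed




locale L3 =
  fixes l :: "real^'d \<Rightarrow> 'x \<Rightarrow> 'y::euclidean_space \<Rightarrow> real"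
    and th :: "real^'d"
    and P :: "('x \<times> 'y) measure" and SX :: "'x measure"
    and R :: "'r measure"
    and A :: "'r \<Rightarrow> (nat \<Rightarrow> 'x \<times> 'y) \<Rightarrow> 'x \<Rightarrow> 'y"
    and n k NN :: nat
  assumes P: "prob_space P" and setsP: "sets P = sets (SX \<Otimes>\<^sub>M (borel :: 'y measure))"
    and R: "prob_space R"
    and Gmeas: "(\<lambda>(x, y). grad l th x y) \<in> borel_measurable (SX \<Otimes>\<^sub>M borel)"
    and Ameas: "(\<lambda>(w, x). A (fst w) (snd w) x)
                  \<in> borel_measurable ((R \<Otimes>\<^sub>M PiM {..<n - n div k} (\<lambda>_. P)) \<Otimes>\<^sub>M SX)"
begin

abbreviation "T \<equiv> train_space R P n"
abbreviation "V \<equiv> R \<Otimes>\<^sub>M PiM {..<n - n div k} (\<lambda>_. P)"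
abbreviation "PX \<equiv> feat P SX"
abbreviation "U \<equiv> PiM {..<NN} (\<lambda>_. PX)"
abbreviation "G \<equiv> grad l th"
abbreviation "f1 \<equiv> fpred A n k 1"
abbreviation "fb \<equiv> fbar T f1"

lemma fst_meas: "fst \<in> measurable P SX"
  using measurable_cong_sets[OF setsP refl] measurable_fst by blast

lemma sets_PX[measurable_cong]: "sets PX = sets SX"
  by (simp add: feat_def)

lemma space_PX: "space PX = space SX"
  by (simp add: feat_def)

lemma prob_PX: "prob_space PX"
  unfolding feat_def by (rule prob_space.prob_space_distr[OF P fst_meas])

lemma prob_T: "prob_space T"
  unfolding train_space_def
  by (intro prob_space_pair R prob_space_PiM) (auto simp: P)

lemma prob_V: "prob_space V"
  by (intro prob_space_pair R prob_space_PiM) (auto simp: P)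

lemma prob_U: "prob_space U"
  by (intro prob_space_PiM) (auto simp: prob_PX)

lemma Gm[measurable]: "(\<lambda>(x, y). G x y) \<in> borel_measurable (SX \<Otimes>\<^sub>M borel)"
  by (rule Gmeas)

lemma Am[measurable]: "(\<lambda>(w, x). A (fst w) (snd w) x) \<in> borel_measurable (V \<Otimes>\<^sub>M SX)"
  by (rule Ameas)

lemma f1m[measurable]: "(\<lambda>(w, x). fpred A n k j w x) \<in> borel_measurable (T \<Otimes>\<^sub>M SX)"
proof -
  have "(\<lambda>(w, x). A (fst w) (snd w) x) \<circ> (\<lambda>(w,x). ((fst w, fold_train n k j (snd w)), x)) \<in> borel_measurable (T \<Otimes>\<^sub>M SX)"
    unfolding train_space_def by (rule measurable_comp[OF _ Am]) measurable
  then show ?thesis by (simp add: fpred_def o_def split_beta')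
qed

lemma fbm[measurable]: "fb \<in> borel_measurable SX"
proof -
  interpret T: prob_space T by (rule prob_T)
  have "(\<lambda>x. \<integral>w. f1 w x \<partial>T) \<in> borel_measurable SX"
    using f1m[of 1] by (intro T.borel_measurable_lebesgue_integral) (simp add: measurable_pair_swap_iff[symmetric] split_beta')
  then show ?thesis unfolding fbar_def .
qed

end


context L3 begin

lemma GAm[measurable]: "(\<lambda>(v, x). G x (A (fst v) (snd v) x)) \<in> borel_measurable (V \<Otimes>\<^sub>M SX)"
  by measurable

lemma intGAm[measurable]: "(\<lambda>v. \<integral>x. G x (A (fst v) (snd v) x) \<partial>PX) \<in> borel_measurable V"
proof -
  interpret PX: prob_space PX by (rule prob_PX)
  show ?thesis
    apply (rule PX.borel_measurable_lebesgue_integral)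
    using GAm by (simp add: measurable_cong_sets[OF refl sets_pair_measure_cong[OF refl sets_PX]] split_beta')
qed

lemma Ltil_meas[measurable]:
  "(\<lambda>(v, u). Ltil PX G NN (A (fst v) (snd v)) fb u) \<in> borel_measurable (V \<Otimes>\<^sub>M U)"
  unfolding Ltil_def split_beta'
  by measurable

end



lemma distr_two_coords:
  assumes PX: "prob_space PX" and ik: "i \<in> I" "k \<in> I" "i \<noteq> k"
  shows "distr (PiM I (\<lambda>_. PX)) (PX \<Otimes>\<^sub>M PX) (\<lambda>u. (u i, u k)) = PX \<Otimes>\<^sub>M PX"
proof -
  interpret PX: prob_space PX by (rule PX)
  have cb: "case_bool PX PX = (\<lambda>_. PX)" by (rule ext) (simp split: bool.split)
  have r: "distr (PiM I (\<lambda>_. PX)) (\<Pi>\<^sub>M b\<in>UNIV. (\<lambda>_. PX) ((\<lambda>b. if b then i else k) b))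
      (\<lambda>\<omega>. \<lambda>b\<in>UNIV. \<omega> ((\<lambda>b. if b then i else k) b)) = (\<Pi>\<^sub>M b\<in>UNIV. (\<lambda>_. PX) ((\<lambda>b. if b then i else k) b))"
    by (rule distr_PiM_reindex) (use ik PX in \<open>auto simp: inj_on_def\<close>)
  have "PX \<Otimes>\<^sub>M PX = distr (Pi\<^sub>M UNIV (case_bool PX PX)) (PX \<Otimes>\<^sub>M PX) (\<lambda>x. (x True, x False))"
    by (rule pair_measure_eq_distr_PiM) (auto intro: PX.sigma_finite_measure_axioms)
  also have "\<dots> = distr (Pi\<^sub>M UNIV (\<lambda>_. PX)) (PX \<Otimes>\<^sub>M PX) (\<lambda>x. (x True, x False))" by (simp add: cb)
  also have "\<dots> = distr (distr (PiM I (\<lambda>_. PX)) (Pi\<^sub>M UNIV (\<lambda>_. PX)) (\<lambda>\<omega>. \<lambda>b\<in>UNIV. \<omega> (if b then i else k))) (PX \<Otimes>\<^sub>M PX) (\<lambda>x. (x True, x False))"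
    using r by simp
  also have "\<dots> = distr (PiM I (\<lambda>_. PX)) (PX \<Otimes>\<^sub>M PX) ((\<lambda>x. (x True, x False)) \<circ> (\<lambda>\<omega>. \<lambda>b\<in>UNIV. \<omega> (if b then i else k)))"
  proof (rule distr_distr)
    show "(\<lambda>x. (x True, x False)) \<in> measurable (Pi\<^sub>M UNIV (\<lambda>_. PX)) (PX \<Otimes>\<^sub>M PX)" by measurable
    show "(\<lambda>\<omega>. \<lambda>b\<in>UNIV. \<omega> (if b then i else k)) \<in> measurable (PiM I (\<lambda>_. PX)) (Pi\<^sub>M UNIV (\<lambda>_. PX))"
      by (rule measurable_restrict) (use ik in \<open>auto intro!: measurable_component_singleton\<close>)
  qed
  also have "((\<lambda>x. (x True, x False)) \<circ> (\<lambda>\<omega>. \<lambda>b\<in>UNIV. \<omega> (if b then i else k))) = (\<lambda>u. (u i, u k))"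
    by (auto simp: fun_eq_iff)
  finally show ?thesis by simp
qed

lemma iid_cross:
  fixes Z :: "'x \<Rightarrow> real"
  assumes PX: "prob_space PX" and Zm: "Z \<in> borel_measurable PX" and Zi: "integrable PX Z"
    and ik: "i \<in> I" "k \<in> I" "i \<noteq> k"
  shows "integrable (PiM I (\<lambda>_. PX)) (\<lambda>u. Z (u i) * Z (u k))"
    "(\<integral>u. Z (u i) * Z (u k) \<partial>PiM I (\<lambda>_. PX)) = (\<integral>x. Z x \<partial>PX) * (\<integral>x. Z x \<partial>PX)"
proof -
  interpret U: prob_space "PiM I (\<lambda>_. PX)" by (rule prob_space_PiM) (use PX in auto)
  have di: "distr (PiM I (\<lambda>_. PX)) PX (\<lambda>u. u j) = PX" if "j \<in> I" for j
    by (rule distr_PiM_component) (use PX that in auto)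
  have rv: "(\<lambda>u. u j) \<in> measurable (PiM I (\<lambda>_. PX)) PX" if "j \<in> I" for j
    using measurable_component_singleton[OF that, of "\<lambda>_. PX"] by simp
  have ind: "U.indep_var PX (\<lambda>u. u i) PX (\<lambda>u. u k)"
    unfolding U.indep_var_distribution_eq
    using rv ik di distr_two_coords[OF PX ik] by simp
  have ind2: "U.indep_var borel (Z \<circ> (\<lambda>u. u i)) borel (Z \<circ> (\<lambda>u. u k))"
    by (rule U.indep_var_compose[OF ind]) (use Zm in auto)
  have int: "integrable (PiM I (\<lambda>_. PX)) (\<lambda>u. Z (u j))" if "j \<in> I" for j
  proof -
    have "integrable (distr (PiM I (\<lambda>_. PX)) PX (\<lambda>u. u j)) Z" using di[OF that] Zi by simp
    then show ?thesis by (subst (asm) integrable_distr_eq) (use rv that Zm in auto)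
  qed
  have e: "(\<integral>u. Z (u j) \<partial>PiM I (\<lambda>_. PX)) = (\<integral>x. Z x \<partial>PX)" if "j \<in> I" for j
  proof -
    have "(\<integral>x. Z x \<partial>PX) = (\<integral>x. Z x \<partial>distr (PiM I (\<lambda>_. PX)) PX (\<lambda>u. u j))" using di[OF that] by simp
    also have "\<dots> = (\<integral>u. Z (u j) \<partial>PiM I (\<lambda>_. PX))" by (rule integral_distr) (use rv that Zm in auto)
    finally show ?thesis by simp
  qed
  show "integrable (PiM I (\<lambda>_. PX)) (\<lambda>u. Z (u i) * Z (u k))"
    using U.indep_var_integrable[OF ind2] int ik by (simp add: o_def)
  show "(\<integral>u. Z (u i) * Z (u k) \<partial>PiM I (\<lambda>_. PX)) = (\<integral>x. Z x \<partial>PX) * (\<integral>x. Z x \<partial>PX)"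
    using U.indep_var_lebesgue_integral[OF ind2] int ik e by (simp add: o_def)
qed

lemma iid_diag:
  fixes Z :: "'x \<Rightarrow> real"
  assumes PX: "prob_space PX" and Zm: "Z \<in> borel_measurable PX" and Zi: "integrable PX Z"
    and i: "i \<in> I"
  shows "integrable (PiM I (\<lambda>_. PX)) (\<lambda>u. Z (u i))"
    "(\<integral>u. Z (u i) \<partial>PiM I (\<lambda>_. PX)) = (\<integral>x. Z x \<partial>PX)"
proof -
  have di: "distr (PiM I (\<lambda>_. PX)) PX (\<lambda>u. u i) = PX"
    by (rule distr_PiM_component) (use PX i in auto)
  have rv: "(\<lambda>u. u i) \<in> measurable (PiM I (\<lambda>_. PX)) PX"
    using measurable_component_singleton[OF i, of "\<lambda>_. PX"] by simp
  have "integrable (distr (PiM I (\<lambda>_. PX)) PX (\<lambda>u. u i)) Z" using di Zi by simp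
  then show "integrable (PiM I (\<lambda>_. PX)) (\<lambda>u. Z (u i))" by (subst (asm) integrable_distr_eq) (use rv Zm in auto)
  have "(\<integral>x. Z x \<partial>PX) = (\<integral>x. Z x \<partial>distr (PiM I (\<lambda>_. PX)) PX (\<lambda>u. u i))" using di by simp
  also have "\<dots> = (\<integral>u. Z (u i) \<partial>PiM I (\<lambda>_. PX))" by (rule integral_distr) (use rv Zm in auto)
  finally show "(\<integral>u. Z (u i) \<partial>PiM I (\<lambda>_. PX)) = (\<integral>x. Z x \<partial>PX)" by simp
qed




lemma iid_sum_sq:
  fixes Z :: "'x \<Rightarrow> real"
  assumes PX: "prob_space PX" and Zm: "Z \<in> borel_measurable PX" and Z2: "integrable PX (\<lambda>x. (Z x)\<^sup>2)"
    and Z0: "(\<integral>x. Z x \<partial>PX) = 0"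
  shows "integrable (PiM {..<NN} (\<lambda>_. PX)) (\<lambda>u. (\<Sum>i<NN. Z (u i))\<^sup>2)"
    "(\<integral>u. (\<Sum>i<NN. Z (u i))\<^sup>2 \<partial>PiM {..<NN} (\<lambda>_. PX)) = real NN * (\<integral>x. (Z x)\<^sup>2 \<partial>PX)"
proof -
  interpret PX: prob_space PX by (rule PX)
  have Zi: "integrable PX Z" by (rule PX.square_integrable_imp_integrable[OF Zm Z2])
  have Z2': "integrable PX (\<lambda>x. Z x * Z x)" using Z2 by (simp add: power2_eq_square)
  have Z2m: "(\<lambda>x. Z x * Z x) \<in> borel_measurable PX" using Zm by simp
  have eq: "(\<lambda>u. (\<Sum>i<NN. Z (u i))\<^sup>2) = (\<lambda>u. \<Sum>i<NN. \<Sum>k<NN. Z (u i) * Z (u k))"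
    by (simp add: power2_eq_square sum_product)
  have ti: "integrable (PiM {..<NN} (\<lambda>_. PX)) (\<lambda>u. Z (u i) * Z (u k))" if "i < NN" "k < NN" for i k
  proof (cases "i = k")
    case True
    then show ?thesis using iid_diag(1)[OF PX Z2m Z2', of i "{..<NN}"] that by simp
  next
    case False
    then show ?thesis using iid_cross(1)[OF PX Zm Zi, of i "{..<NN}" k] that by simp
  qed
  have te: "(\<integral>u. Z (u i) * Z (u k) \<partial>PiM {..<NN} (\<lambda>_. PX)) = (if i = k then (\<integral>x. (Z x)\<^sup>2 \<partial>PX) else 0)"
    if "i < NN" "k < NN" for i k
  proof (cases "i = k")
    case True
    then show ?thesis using iid_diag(2)[OF PX Z2m Z2', of i "{..<NN}"] that by (simp add: power2_eq_square)
  next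
    case False
    then show ?thesis using iid_cross(2)[OF PX Zm Zi, of i "{..<NN}" k] that Z0 by simp
  qed
  show "integrable (PiM {..<NN} (\<lambda>_. PX)) (\<lambda>u. (\<Sum>i<NN. Z (u i))\<^sup>2)"
    unfolding eq
    apply (rule Bochner_Integration.integrable_sum)
    apply (rule Bochner_Integration.integrable_sum)
    using ti by auto
  have "(\<integral>u. (\<Sum>i<NN. Z (u i))\<^sup>2 \<partial>PiM {..<NN} (\<lambda>_. PX))
      = (\<Sum>i<NN. \<Sum>k<NN. (\<integral>u. Z (u i) * Z (u k) \<partial>PiM {..<NN} (\<lambda>_. PX)))"
    unfolding eq
    apply (subst Bochner_Integration.integral_sum)
     apply (rule Bochner_Integration.integrable_sum) using ti apply simp
    apply (rule sum.cong[OF refl])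
    apply (subst Bochner_Integration.integral_sum) using ti by auto
  also have "\<dots> = (\<Sum>i<NN. \<Sum>k<NN. (if i = k then (\<integral>x. (Z x)\<^sup>2 \<partial>PX) else 0))"
    using te by simp
  also have "\<dots> = real NN * (\<integral>x. (Z x)\<^sup>2 \<partial>PX)"
    by (simp add: sum.delta)
  finally show "(\<integral>u. (\<Sum>i<NN. Z (u i))\<^sup>2 \<partial>PiM {..<NN} (\<lambda>_. PX)) = real NN * (\<integral>x. (Z x)\<^sup>2 \<partial>PX)" .
qed




lemma le_1_sq: "(t::real) \<le> 1 + t\<^sup>2"
proof -
  have "0 \<le> (t - 1/2)\<^sup>2" by simp
  also have "(t - 1/2)\<^sup>2 = t\<^sup>2 - t + 1/4" by (simp add: power2_eq_square algebra_simps)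
  finally show ?thesis by linarith
qed

lemma sq_sum_le: "((x::real) + y)\<^sup>2 \<le> 2 * x\<^sup>2 + 2 * y\<^sup>2"
proof -
  have "0 \<le> (x - y)\<^sup>2" by simp
  then show ?thesis by (simp add: power2_diff power2_sum)
qed

lemma sq_integrable_imp_integrable_vec:
  fixes a :: "'x \<Rightarrow> real^'d"
  assumes "prob_space PX" "a \<in> borel_measurable PX" "integrable PX (\<lambda>x. (norm (a x))\<^sup>2)"
  shows "integrable PX a"
proof -
  interpret prob_space PX by fact
  show ?thesis
    apply (rule Bochner_Integration.integrable_bound[where f="\<lambda>x. 1 + (norm (a x))\<^sup>2"])
    using assms le_1_sq by auto
qed

lemma vec_sum_nth: "(\<Sum>i\<in>S. (v i :: real^'d)) $ c = (\<Sum>i\<in>S. v i $ c)"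
  by (induction S rule: infinite_finite_induct) auto

lemma borel_measurable_vec_nth_comp[measurable (raw)]:
  fixes f :: "'a \<Rightarrow> real^'d"
  assumes "f \<in> borel_measurable M"
  shows "(\<lambda>x. f x $ c) \<in> borel_measurable M"
proof -
  have "(\<lambda>v::real^'d. v $ c) \<in> borel_measurable borel"
    by (intro borel_measurable_continuous_onI continuous_on_component continuous_on_id)
  from measurable_compose[OF assms this] show ?thesis .
qed





lemma Lbound:
  fixes PX :: "'x measure" and G :: "'x \<Rightarrow> 'y \<Rightarrow> real^'d" and f fb :: "'x \<Rightarrow> 'y"
  assumes PX: "prob_space PX"
    and am: "(\<lambda>x. G x (f x)) \<in> borel_measurable PX" and bm: "(\<lambda>x. G x (fb x)) \<in> borel_measurable PX"
    and ai: "integrable PX (\<lambda>x. (norm (G x (f x)))\<^sup>2)" and bi: "integrable PX (\<lambda>x. (norm (G x (fb x)))\<^sup>2)"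
  shows "(\<integral>\<^sup>+u. ennreal \<bar>Ltil PX G NN f fb u $ c\<bar> \<partial>PiM {..<NN} (\<lambda>_. PX)) \<le> ennreal (sqrt (condvar PX G f fb c))"
proof -
  interpret PX: prob_space PX by (rule PX)
  define a where "a = (\<lambda>x. G x (f x))"
  define b where "b = (\<lambda>x. G x (fb x))"
  have am': "a \<in> borel_measurable PX" and bm': "b \<in> borel_measurable PX" using am bm by (simp_all add: a_def b_def)
  have aI: "integrable PX a" using sq_integrable_imp_integrable_vec[OF PX am'] ai by (simp add: a_def)
  have bI: "integrable PX b" using sq_integrable_imp_integrable_vec[OF PX bm'] bi by (simp add: b_def)
  define D where "D = (\<lambda>x. (a x - b x) $ c)"
  have Dm: "D \<in> borel_measurable PX" unfolding D_def using am' bm' by measurable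
  have D2b: "(D x)\<^sup>2 \<le> 2 * (norm (a x))\<^sup>2 + 2 * (norm (b x))\<^sup>2" for x
  proof -
    have "\<bar>D x\<bar> \<le> norm (a x - b x)" unfolding D_def by (rule component_le_norm_cart)
    also have "\<dots> \<le> norm (a x) + norm (b x)" by (rule norm_triangle_ineq4)
    finally have "(D x)\<^sup>2 \<le> (norm (a x) + norm (b x))\<^sup>2"
      by (metis abs_ge_zero abs_le_square_iff power2_abs abs_of_nonneg add_nonneg_nonneg norm_ge_zero)
    also have "\<dots> \<le> 2 * (norm (a x))\<^sup>2 + 2 * (norm (b x))\<^sup>2" by (rule sq_sum_le)
    finally show ?thesis .
  qed
  have D2I: "integrable PX (\<lambda>x. (D x)\<^sup>2)"
    apply (rule Bochner_Integration.integrable_bound[where f="\<lambda>x. 2 * (norm (a x))\<^sup>2 + 2 * (norm (b x))\<^sup>2"])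
    using ai bi Dm D2b by (auto simp: a_def b_def)
  have DI: "integrable PX D" by (rule PX.square_integrable_imp_integrable[OF Dm D2I])
  define m where "m = (\<integral>x. D x \<partial>PX)"
  define Z where "Z = (\<lambda>x. D x - m)"
  have Zm: "Z \<in> borel_measurable PX" unfolding Z_def using Dm by simp
  have Zsq: "(Z x)\<^sup>2 = (D x)\<^sup>2 - 2 * m * D x + m\<^sup>2" for x
    unfolding Z_def by (simp add: power2_diff)
  have Z2I: "integrable PX (\<lambda>x. (Z x)\<^sup>2)" unfolding Zsq using D2I DI by simp
  have Z0: "(\<integral>x. Z x \<partial>PX) = 0" unfolding Z_def m_def using DI by (simp add: PX.prob_space)
  have Z2: "(\<integral>x. (Z x)\<^sup>2 \<partial>PX) = condvar PX G f fb c"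
  proof -
    have "(\<integral>x. (Z x)\<^sup>2 \<partial>PX) = (\<integral>x. (D x)\<^sup>2 \<partial>PX) - 2 * m * m + m\<^sup>2"
      unfolding Zsq using D2I DI by (simp add: PX.prob_space m_def)
    also have "\<dots> = (\<integral>x. (D x)\<^sup>2 \<partial>PX) - m\<^sup>2" by (simp add: power2_eq_square)
    finally show ?thesis unfolding condvar_def D_def m_def a_def b_def by simp
  qed
  have comp: "(\<integral>x. (a x) $ c \<partial>PX) = (\<integral>x. a x \<partial>PX) $ c" "(\<integral>x. (b x) $ c \<partial>PX) = (\<integral>x. b x \<partial>PX) $ c"
    using integral_bounded_linear[OF bounded_linear_vec_nth aI, of c]
      integral_bounded_linear[OF bounded_linear_vec_nth bI, of c] by simp_all
  have mc: "m = (\<integral>x. a x \<partial>PX) $ c - (\<integral>x. b x \<partial>PX) $ c"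
  proof -
    have "m = (\<integral>x. (a x) $ c - (b x) $ c \<partial>PX)" unfolding m_def D_def by simp
    also have "\<dots> = (\<integral>x. (a x) $ c \<partial>PX) - (\<integral>x. (b x) $ c \<partial>PX)"
      apply (rule Bochner_Integration.integral_diff)
      using integrable_bounded_linear[OF bounded_linear_vec_nth aI, of c]
        integrable_bounded_linear[OF bounded_linear_vec_nth bI, of c] by auto
    finally show ?thesis using comp by simp
  qed
  define Y where "Y = (\<lambda>u. Ltil PX G NN f fb u $ c)"
  have Yeq: "Y u = (1 / sqrt (real NN)) * (\<Sum>i<NN. Z (u i))" for u
    unfolding Y_def Ltil_def Z_def D_def mc
    by (simp add: vec_sum_nth a_def b_def algebra_simps)
  have lhs: "(\<integral>\<^sup>+u. ennreal \<bar>Ltil PX G NN f fb u $ c\<bar> \<partial>PiM {..<NN} (\<lambda>_. PX)) = (\<integral>\<^sup>+u. ennreal \<bar>Y u\<bar> \<partial>PiM {..<NN} (\<lambda>_. PX))"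
    by (simp add: Y_def)
  interpret U: prob_space "PiM {..<NN} (\<lambda>_. PX)" by (rule prob_space_PiM) (use PX in auto)
  show ?thesis
  proof (cases "NN = 0")
    case True
    then show ?thesis unfolding lhs Yeq by simp
  next
    case False
    define S where "S = (\<lambda>u. \<Sum>i<NN. Z (u i))"
    have SI: "integrable (PiM {..<NN} (\<lambda>_. PX)) (\<lambda>u. (S u)\<^sup>2)"
      unfolding S_def by (rule iid_sum_sq(1)[OF PX Zm Z2I Z0])
    have Sint: "(\<integral>u. (S u)\<^sup>2 \<partial>PiM {..<NN} (\<lambda>_. PX)) = real NN * condvar PX G f fb c"
      unfolding S_def iid_sum_sq(2)[OF PX Zm Z2I Z0] Z2 ..
    have Ysq: "(Y u)\<^sup>2 = (S u)\<^sup>2 / real NN" for u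
      unfolding Yeq S_def by (simp add: power_mult_distrib power_divide)
    have Sm: "S \<in> borel_measurable (PiM {..<NN} (\<lambda>_. PX))" unfolding S_def using Zm by measurable
    have Ym: "Y \<in> borel_measurable (PiM {..<NN} (\<lambda>_. PX))"
    proof -
      have "Y = (\<lambda>u. (1 / sqrt (real NN)) * S u)" using Yeq S_def by (simp add: fun_eq_iff)
      then show ?thesis using Sm by simp
    qed
    have Y2I: "integrable (PiM {..<NN} (\<lambda>_. PX)) (\<lambda>u. (\<bar>Y u\<bar>)\<^sup>2)"
      unfolding power2_abs Ysq using SI by simp
    have Y2int: "(\<integral>u. (\<bar>Y u\<bar>)\<^sup>2 \<partial>PiM {..<NN} (\<lambda>_. PX)) = condvar PX G f fb c"
      unfolding power2_abs Ysq using Sint False by simp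
    have aYm: "(\<lambda>u. \<bar>Y u\<bar>) \<in> borel_measurable (PiM {..<NN} (\<lambda>_. PX))" using Ym by simp
    have aYI: "integrable (PiM {..<NN} (\<lambda>_. PX)) (\<lambda>u. \<bar>Y u\<bar>)"
      by (rule U.square_integrable_imp_integrable[OF aYm Y2I])
    have nn: "(\<integral>\<^sup>+u. ennreal \<bar>Y u\<bar> \<partial>PiM {..<NN} (\<lambda>_. PX)) = ennreal (\<integral>u. \<bar>Y u\<bar> \<partial>PiM {..<NN} (\<lambda>_. PX))"
      by (rule nn_integral_eq_integral[OF aYI]) auto
    have "0 \<le> U.variance (\<lambda>u. \<bar>Y u\<bar>)" by (rule U.variance_positive)
    also have "U.variance (\<lambda>u. \<bar>Y u\<bar>) = condvar PX G f fb c - (\<integral>u. \<bar>Y u\<bar> \<partial>PiM {..<NN} (\<lambda>_. PX))\<^sup>2"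
      using U.variance_eq[OF aYI Y2I] Y2int by simp
    finally have "(\<integral>u. \<bar>Y u\<bar> \<partial>PiM {..<NN} (\<lambda>_. PX))\<^sup>2 \<le> condvar PX G f fb c" by simp
    then have "(\<integral>u. \<bar>Y u\<bar> \<partial>PiM {..<NN} (\<lambda>_. PX)) \<le> sqrt (condvar PX G f fb c)"
      by (rule real_le_rsqrt)
    then show ?thesis unfolding lhs nn by (rule ennreal_leI)
  qed
qed



context L3 begin

lemma phi_meas[measurable]: "(\<lambda>w. (fst w, fold_train n k j (snd w))) \<in> measurable T V"
  unfolding train_space_def by measurable

lemma distr_phi: "distr T V (\<lambda>w. (fst w, fold_train n k j (snd w))) = V"
  by (rule distr_fold_T[OF P R])

lemma Gfb_meas[measurable]: "(\<lambda>x. G x (fb x)) \<in> borel_measurable SX"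
  by measurable

lemma condvar_meas[measurable]:
  "(\<lambda>v. condvar PX G (A (fst v) (snd v)) fb c) \<in> borel_measurable V"
proof -
  interpret PX: prob_space PX by (rule prob_PX)
  have j: "(\<lambda>(v, x). (G x (A (fst v) (snd v) x) - G x (fb x)) $ c) \<in> borel_measurable (V \<Otimes>\<^sub>M PX)"
    using measurable_cong_sets[OF sets_pair_measure_cong[OF refl sets_PX] refl] by measurable
  have j2: "(\<lambda>(v, x). ((G x (A (fst v) (snd v) x) - G x (fb x)) $ c)\<^sup>2) \<in> borel_measurable (V \<Otimes>\<^sub>M PX)"
    using measurable_cong_sets[OF sets_pair_measure_cong[OF refl sets_PX] refl] by measurable
  have "(\<lambda>v. \<integral>x. ((G x (A (fst v) (snd v) x) - G x (fb x)) $ c)\<^sup>2 \<partial>PX) \<in> borel_measurable V"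
    by (rule PX.borel_measurable_lebesgue_integral) (use j2 in \<open>simp add: split_beta'\<close>)
  moreover have "(\<lambda>v. \<integral>x. (G x (A (fst v) (snd v) x) - G x (fb x)) $ c \<partial>PX) \<in> borel_measurable V"
    by (rule PX.borel_measurable_lebesgue_integral) (use j in \<open>simp add: split_beta'\<close>)
  ultimately show ?thesis unfolding condvar_def by measurable
qed

lemma AE_good:
  assumes mom_Gf: "integrable (T \<Otimes>\<^sub>M PX) (\<lambda>(w, x). (norm (G x (f1 w x)))\<^sup>2)"
  shows "AE v in V. integrable PX (\<lambda>x. (norm (G x (A (fst v) (snd v) x)))\<^sup>2)"
proof -
  interpret PX: prob_space PX by (rule prob_PX)
  interpret V: prob_space V by (rule prob_V)
  interpret VX: pair_sigma_finite V PX ..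
  have hm: "(\<lambda>(v, x). (norm (G x (A (fst v) (snd v) x)))\<^sup>2) \<in> borel_measurable (V \<Otimes>\<^sub>M PX)"
    using measurable_cong_sets[OF sets_pair_measure_cong[OF refl sets_PX] refl] by measurable
  have gm: "(\<lambda>(w, x). ((fst w, fold_train n k 1 (snd w)), x)) \<in> measurable (T \<Otimes>\<^sub>M PX) (V \<Otimes>\<^sub>M PX)"
    by measurable
  have "distr T V (\<lambda>w. (fst w, fold_train n k 1 (snd w))) \<Otimes>\<^sub>M distr PX PX (\<lambda>x. x)
      = distr (T \<Otimes>\<^sub>M PX) (V \<Otimes>\<^sub>M PX) (\<lambda>(w, x). ((fst w, fold_train n k 1 (snd w)), x))"
    by (rule pair_measure_distr) (auto simp: PX.sigma_finite_measure_axioms)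
  then have d: "distr (T \<Otimes>\<^sub>M PX) (V \<Otimes>\<^sub>M PX) (\<lambda>(w, x). ((fst w, fold_train n k 1 (snd w)), x)) = V \<Otimes>\<^sub>M PX"
    by (simp add: distr_phi)
  have "integrable (distr (T \<Otimes>\<^sub>M PX) (V \<Otimes>\<^sub>M PX) (\<lambda>(w, x). ((fst w, fold_train n k 1 (snd w)), x)))
          (\<lambda>(v, x). (norm (G x (A (fst v) (snd v) x)))\<^sup>2)"
    apply (subst integrable_distr_eq[OF gm hm])
    using mom_Gf by (simp add: fpred_def split_beta')
  then have "integrable (V \<Otimes>\<^sub>M PX) (\<lambda>(v, x). (norm (G x (A (fst v) (snd v) x)))\<^sup>2)"
    unfolding d .
  from VX.AE_integrable_fst'[OF this] show ?thesis by simp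
qed

lemma fold_bound:
  assumes mom_Gf: "integrable (T \<Otimes>\<^sub>M PX) (\<lambda>(w, x). (norm (G x (f1 w x)))\<^sup>2)"
    and mom_Gfbar: "integrable PX (\<lambda>x. (norm (G x (fb x)))\<^sup>2)"
  shows "(\<integral>\<^sup>+\<omega>. ennreal \<bar>Ltil PX G NN (fpred A n k j (fst \<omega>)) fb (snd \<omega>) $ c\<bar> \<partial>(T \<Otimes>\<^sub>M U))
     \<le> (\<integral>\<^sup>+w. ennreal (sqrt (condvar PX G (f1 w) fb c)) \<partial>T)"
proof -
  interpret PX: prob_space PX by (rule prob_PX)
  interpret U: prob_space U by (rule prob_U)
  interpret V: prob_space V by (rule prob_V)
  interpret T: prob_space T by (rule prob_T)
  interpret TU: pair_sigma_finite T U ..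
  define H where "H = (\<lambda>v. \<integral>\<^sup>+u. ennreal \<bar>Ltil PX G NN (A (fst v) (snd v)) fb u $ c\<bar> \<partial>U)"
  have jm: "(\<lambda>(v, u). ennreal \<bar>Ltil PX G NN (A (fst v) (snd v)) fb u $ c\<bar>) \<in> borel_measurable (V \<Otimes>\<^sub>M U)"
    using Ltil_meas by measurable
  have Hm: "H \<in> borel_measurable V"
    unfolding H_def using U.borel_measurable_nn_integral_fst[OF jm] by simp
  have jm2: "(\<lambda>\<omega>. ennreal \<bar>Ltil PX G NN (fpred A n k j (fst \<omega>)) fb (snd \<omega>) $ c\<bar>) \<in> borel_measurable (T \<Otimes>\<^sub>M U)"
  proof -
    have "(\<lambda>(v, u). ennreal \<bar>Ltil PX G NN (A (fst v) (snd v)) fb u $ c\<bar>) \<circ> (\<lambda>\<omega>. ((fst (fst \<omega>), fold_train n k j (snd (fst \<omega>))), snd \<omega>))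
        \<in> borel_measurable (T \<Otimes>\<^sub>M U)"
      by (rule measurable_comp[OF _ jm]) measurable
    then show ?thesis by (simp add: o_def fpred_def)
  qed
  have "(\<integral>\<^sup>+\<omega>. ennreal \<bar>Ltil PX G NN (fpred A n k j (fst \<omega>)) fb (snd \<omega>) $ c\<bar> \<partial>(T \<Otimes>\<^sub>M U))
      = (\<integral>\<^sup>+w. \<integral>\<^sup>+u. ennreal \<bar>Ltil PX G NN (fpred A n k j w) fb u $ c\<bar> \<partial>U \<partial>T)"
    using U.nn_integral_fst[OF jm2] by simp
  also have "\<dots> = (\<integral>\<^sup>+w. H (fst w, fold_train n k j (snd w)) \<partial>T)"
    by (simp add: H_def fpred_def)
  also have "\<dots> = (\<integral>\<^sup>+v. H v \<partial>distr T V (\<lambda>w. (fst w, fold_train n k j (snd w))))"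
    by (rule nn_integral_distr[symmetric]) (auto simp: Hm)
  also have "\<dots> = (\<integral>\<^sup>+v. H v \<partial>V)" by (simp add: distr_phi)
  also have "\<dots> \<le> (\<integral>\<^sup>+v. ennreal (sqrt (condvar PX G (A (fst v) (snd v)) fb c)) \<partial>V)"
  proof (rule nn_integral_mono_AE)
    show "AE v in V. H v \<le> ennreal (sqrt (condvar PX G (A (fst v) (snd v)) fb c))"
      using AE_good[OF mom_Gf] AE_space
    proof eventually_elim
      case (elim v)
      have p: "Pair v \<in> measurable PX (V \<Otimes>\<^sub>M SX)"
        unfolding measurable_cong_sets[OF sets_PX refl] by (rule measurable_Pair1'[OF elim(2)])
      have am: "(\<lambda>x. G x (A (fst v) (snd v) x)) \<in> borel_measurable PX"
        using measurable_comp[OF p GAm] by (simp add: o_def)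
      have bm: "(\<lambda>x. G x (fb x)) \<in> borel_measurable PX"
        using measurable_cong_sets[OF sets_PX refl] by measurable
      show ?case unfolding H_def by (rule Lbound[where G=G and f="A (fst v) (snd v)" and fb=fb, OF prob_PX am bm elim(1) mom_Gfbar])
    qed
  qed
  also have "\<dots> = (\<integral>\<^sup>+v. ennreal (sqrt (condvar PX G (A (fst v) (snd v)) fb c)) \<partial>distr T V (\<lambda>w. (fst w, fold_train n k 1 (snd w))))"
    by (simp add: distr_phi)
  also have "\<dots> = (\<integral>\<^sup>+w. ennreal (sqrt (condvar PX G (f1 w) fb c)) \<partial>T)"
  proof -
    have cm: "(\<lambda>v. ennreal (sqrt (condvar PX G (A (fst v) (snd v)) fb c))) \<in> borel_measurable V"
      using condvar_meas[of c] by measurable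
    have cm': "(\<lambda>v. ennreal (sqrt (condvar PX G (A (fst v) (snd v)) fb c))) \<in> borel_measurable (distr T V (\<lambda>w. (fst w, fold_train n k 1 (snd w))))"
      unfolding distr_phi by (rule cm)
    show ?thesis by (subst nn_integral_distr[OF phi_meas cm']) (simp add: fpred_def)
  qed
  finally show ?thesis .
qed

end


context L3 begin

lemma Lj_meas[measurable]:
  "(\<lambda>\<omega>. Ltil PX G NN (fpred A n k j (fst \<omega>)) fb (snd \<omega>)) \<in> borel_measurable (T \<Otimes>\<^sub>M U)"
proof -
  have "(\<lambda>(v, u). Ltil PX G NN (A (fst v) (snd v)) fb u) \<circ> (\<lambda>\<omega>. ((fst (fst \<omega>), fold_train n k j (snd (fst \<omega>))), snd \<omega>))
      \<in> borel_measurable (T \<Otimes>\<^sub>M U)"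
    by (rule measurable_comp[OF _ Ltil_meas]) measurable
  then show ?thesis by (simp add: o_def fpred_def)
qed

lemma pw_bound:
  assumes k: "0 < k"
  shows "norm ((1 / real k) *\<^sub>R (\<Sum>j=1..k. Ltil PX G NN (fpred A n k j (fst \<omega>)) fb (snd \<omega>)))
     \<le> (\<Sum>c\<in>UNIV. \<Sum>j=1..k. (1 / real k) * \<bar>Ltil PX G NN (fpred A n k j (fst \<omega>)) fb (snd \<omega>) $ c\<bar>)"
proof -
  define L where "L = (\<lambda>j. Ltil PX G NN (fpred A n k j (fst \<omega>)) fb (snd \<omega>))"
  have "norm ((1 / real k) *\<^sub>R (\<Sum>j=1..k. L j)) \<le> (\<Sum>c\<in>UNIV. \<bar>((1 / real k) *\<^sub>R (\<Sum>j=1..k. L j)) $ c\<bar>)"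
    by (rule norm_le_l1_cart)
  also have "\<dots> \<le> (\<Sum>c\<in>UNIV. \<Sum>j=1..k. (1 / real k) * \<bar>L j $ c\<bar>)"
  proof (rule sum_mono)
    fix c
    have "\<bar>((1 / real k) *\<^sub>R (\<Sum>j=1..k. L j)) $ c\<bar> = (1 / real k) * \<bar>\<Sum>j=1..k. L j $ c\<bar>"
      by (simp add: vec_sum_nth abs_mult)
    also have "\<dots> \<le> (1 / real k) * (\<Sum>j=1..k. \<bar>L j $ c\<bar>)"
      by (rule mult_left_mono) (auto intro: sum_abs)
    also have "\<dots> = (\<Sum>j=1..k. (1 / real k) * \<bar>L j $ c\<bar>)" by (simp add: sum_distrib_left)
    finally show "\<bar>((1 / real k) *\<^sub>R (\<Sum>j=1..k. L j)) $ c\<bar> \<le> (\<Sum>j=1..k. (1 / real k) * \<bar>L j $ c\<bar>)" .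
  qed
  finally show ?thesis unfolding L_def .
qed

lemma sqrt_K_mono: "1 \<le> K \<Longrightarrow> ennreal (sqrt x) \<le> ennreal (sqrt (K * x))"
proof (cases "0 \<le> x")
  case True
  assume "1 \<le> K"
  then have "x \<le> K * x" using True by (metis mult_1 mult_right_mono)
  then show ?thesis by (intro ennreal_leI real_sqrt_le_mono)
next
  case False
  then have "sqrt x \<le> 0" by simp
  then have "ennreal (sqrt x) = 0" by (rule ennreal_neg)
  then show ?thesis by simp
qed

lemma markov_bound:
  assumes k: "0 < k" and e: "0 < e"
    and mom_Gf: "integrable (T \<Otimes>\<^sub>M PX) (\<lambda>(w, x). (norm (G x (f1 w x)))\<^sup>2)"
    and mom_Gfbar: "integrable PX (\<lambda>x. (norm (G x (fb x)))\<^sup>2)"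
  shows "ennreal e * emeasure (T \<Otimes>\<^sub>M U) {\<omega> \<in> space (T \<Otimes>\<^sub>M U).
           norm ((1 / real k) *\<^sub>R (\<Sum>j=1..k. Ltil PX G NN (fpred A n k j (fst \<omega>)) fb (snd \<omega>))) > e}
      \<le> (\<Sum>c\<in>UNIV. \<integral>\<^sup>+w. ennreal (sqrt (real k * condvar PX G (f1 w) fb c)) \<partial>T)"
proof -
  define L where "L = (\<lambda>j \<omega>. Ltil PX G NN (fpred A n k j (fst \<omega>)) fb (snd \<omega>))"
  define E where "E = {\<omega> \<in> space (T \<Otimes>\<^sub>M U). norm ((1 / real k) *\<^sub>R (\<Sum>j=1..k. L j \<omega>)) > e}"
  define I where "I = (\<lambda>c. \<integral>\<^sup>+w. ennreal (sqrt (real k * condvar PX G (f1 w) fb c)) \<partial>T)"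
  have Lm: "(\<lambda>\<omega>. ennreal ((1 / real k) * \<bar>L j \<omega> $ c\<bar>)) \<in> borel_measurable (T \<Otimes>\<^sub>M U)" for j c
    unfolding L_def by measurable
  have Lm': "(\<lambda>\<omega>. ennreal (\<bar>L j \<omega> $ c\<bar>)) \<in> borel_measurable (T \<Otimes>\<^sub>M U)" for j c
    unfolding L_def by measurable
  have "ennreal e * emeasure (T \<Otimes>\<^sub>M U) E \<le> (\<integral>\<^sup>+\<omega>. (\<Sum>c\<in>UNIV. \<Sum>j\<in>{1..k}. ennreal ((1 / real k) * \<bar>L j \<omega> $ c\<bar>)) \<partial>(T \<Otimes>\<^sub>M U))"
  proof (cases "E \<in> sets (T \<Otimes>\<^sub>M U)")
    case True
    have "ennreal e * emeasure (T \<Otimes>\<^sub>M U) E = (\<integral>\<^sup>+\<omega>. ennreal e * indicator E \<omega> \<partial>(T \<Otimes>\<^sub>M U))"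
      by (rule nn_integral_cmult_indicator[OF True, symmetric])
    also have "\<dots> \<le> (\<integral>\<^sup>+\<omega>. (\<Sum>c\<in>UNIV. \<Sum>j\<in>{1..k}. ennreal ((1 / real k) * \<bar>L j \<omega> $ c\<bar>)) \<partial>(T \<Otimes>\<^sub>M U))"
    proof (rule nn_integral_mono)
      fix \<omega> assume "\<omega> \<in> space (T \<Otimes>\<^sub>M U)"
      show "ennreal e * indicator E \<omega> \<le> (\<Sum>c\<in>UNIV. \<Sum>j\<in>{1..k}. ennreal ((1 / real k) * \<bar>L j \<omega> $ c\<bar>))"
      proof (cases "\<omega> \<in> E")
        case True
        then have "e \<le> (\<Sum>c\<in>UNIV. \<Sum>j=1..k. (1 / real k) * \<bar>L j \<omega> $ c\<bar>)"
          using pw_bound[OF k, of \<omega>] unfolding E_def L_def by auto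
        then have "ennreal e \<le> ennreal (\<Sum>c\<in>UNIV. \<Sum>j=1..k. (1 / real k) * \<bar>L j \<omega> $ c\<bar>)"
          by (rule ennreal_leI)
        also have "\<dots> = (\<Sum>c\<in>UNIV. \<Sum>j\<in>{1..k}. ennreal ((1 / real k) * \<bar>L j \<omega> $ c\<bar>))"
          by (simp add: sum_nonneg)
        finally show ?thesis using True by simp
      qed simp
    qed
    finally show ?thesis .
  next
    case False
    then show ?thesis by (simp add: emeasure_notin_sets)
  qed
  also have "\<dots> = (\<Sum>c\<in>UNIV. \<Sum>j\<in>{1..k}. \<integral>\<^sup>+\<omega>. ennreal ((1 / real k) * \<bar>L j \<omega> $ c\<bar>) \<partial>(T \<Otimes>\<^sub>M U))"
    apply (subst nn_integral_sum)
     apply (rule borel_measurable_sum) using Lm apply simp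
    apply (rule sum.cong[OF refl])
    apply (subst nn_integral_sum) using Lm by auto
  also have "\<dots> \<le> (\<Sum>c\<in>UNIV. \<Sum>j\<in>{1..k}. ennreal (1 / real k) * I c)"
  proof (intro sum_mono)
    fix c j
    have "(\<integral>\<^sup>+\<omega>. ennreal ((1 / real k) * \<bar>L j \<omega> $ c\<bar>) \<partial>(T \<Otimes>\<^sub>M U))
        = ennreal (1 / real k) * (\<integral>\<^sup>+\<omega>. ennreal \<bar>L j \<omega> $ c\<bar> \<partial>(T \<Otimes>\<^sub>M U))"
      apply (subst nn_integral_cmult[OF Lm', symmetric])
      apply (rule nn_integral_cong)
      apply (rule ennreal_mult) by auto
    also have "\<dots> \<le> ennreal (1 / real k) * (\<integral>\<^sup>+w. ennreal (sqrt (condvar PX G (f1 w) fb c)) \<partial>T)"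
      by (rule mult_left_mono) (use fold_bound[OF mom_Gf mom_Gfbar, of j c] in \<open>auto simp: L_def\<close>)
    also have "\<dots> \<le> ennreal (1 / real k) * I c"
      unfolding I_def
      by (rule mult_left_mono[OF nn_integral_mono]) (use k in \<open>auto intro!: sqrt_K_mono\<close>)
    finally show "(\<integral>\<^sup>+\<omega>. ennreal ((1 / real k) * \<bar>L j \<omega> $ c\<bar>) \<partial>(T \<Otimes>\<^sub>M U)) \<le> ennreal (1 / real k) * I c" .
  qed
  also have "\<dots> = (\<Sum>c\<in>UNIV. I c)"
  proof (rule sum.cong[OF refl])
    fix c
    have "(\<Sum>j\<in>{1..k}. ennreal (1 / real k) * I c) = of_nat k * (ennreal (1 / real k) * I c)" by simp
    also have "\<dots> = (ennreal (real k) * ennreal (1 / real k)) * I c" by (simp add: ennreal_of_nat_eq_real_of_nat mult.assoc)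
    also have "ennreal (real k) * ennreal (1 / real k) = 1" using k by (simp flip: ennreal_mult)
    finally show "(\<Sum>j\<in>{1..k}. ennreal (1 / real k) * I c) = I c" by simp
  qed
  finally show ?thesis unfolding E_def L_def I_def .
qed

end



theorem lemma3:
  fixes l :: "real^'d \<Rightarrow> 'x \<Rightarrow> 'y::euclidean_space \<Rightarrow> real"
    and th :: "real^'d"
    and P :: "('x \<times> 'y) measure" and SX :: "'x measure"
    and R :: "'r measure"
    and A :: "nat \<Rightarrow> 'r \<Rightarrow> (nat \<Rightarrow> 'x \<times> 'y) \<Rightarrow> 'x \<Rightarrow> 'y"
    and K N :: "nat \<Rightarrow> nat"
  assumes P: "prob_space P" and setsP: "sets P = sets (SX \<Otimes>\<^sub>M (borel :: 'y measure))"
    and R: "prob_space R"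
    and K: "\<And>n. 0 < K n \<and> K n dvd n"
    and N: "\<And>n. 0 < N n"
    and diff: "\<And>x y. (\<lambda>t. l t x y) differentiable (at th)"
    and Gmeas: "(\<lambda>(x, y). grad l th x y) \<in> borel_measurable (SX \<Otimes>\<^sub>M borel)"
    and Ameas: "\<And>n. (\<lambda>(w, x). A n (fst w) (snd w) x)
                  \<in> borel_measurable ((R \<Otimes>\<^sub>M PiM {..<n - n div K n} (\<lambda>_. P)) \<Otimes>\<^sub>M SX)"
    and mom_f: "\<And>n x. integrable (train_space R P n)
                  (\<lambda>w. (norm (fpred (A n) n (K n) 1 w x))\<^sup>2)"
    and mom_Gf: "\<And>n. integrable (train_space R P n \<Otimes>\<^sub>M feat P SX)
                  (\<lambda>(w, x). (norm (grad l th x (fpred (A n) n (K n) 1 w x)))\<^sup>2)"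
    and mom_Gfbar: "\<And>n. integrable (feat P SX)
                  (\<lambda>x. (norm (grad l th x (fbar (train_space R P n) (fpred (A n) n (K n) 1) x)))\<^sup>2)"
    and stable: "\<And>c. (\<lambda>n. \<integral>\<^sup>+ w. ennreal (sqrt (real (K n) *
                    condvar (feat P SX) (grad l th) (fpred (A n) n (K n) 1 w)
                      (fbar (train_space R P n) (fpred (A n) n (K n) 1)) c)) \<partial>(train_space R P n))
                  \<longlonglongrightarrow> 0"
  shows "\<forall>e>0. (\<lambda>n. measure (full_space R P SX (N n) n)
           {\<omega> \<in> space (full_space R P SX (N n) n).
              norm ((1 / real (K n)) *\<^sub>R (\<Sum>j=1..K n.
                 Ltil (feat P SX) (grad l th) (N n) (fpred (A n) n (K n) j (fst \<omega>))
                   (fbar (train_space R P n) (fpred (A n) n (K n) 1)) (snd \<omega>))) > e})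
         \<longlonglongrightarrow> 0"
proof (intro allI impI)
  fix e :: real assume e: "0 < e"
  define E where "E = (\<lambda>n. {\<omega> \<in> space (full_space R P SX (N n) n).
              norm ((1 / real (K n)) *\<^sub>R (\<Sum>j=1..K n.
                 Ltil (feat P SX) (grad l th) (N n) (fpred (A n) n (K n) j (fst \<omega>))
                   (fbar (train_space R P n) (fpred (A n) n (K n) 1)) (snd \<omega>))) > e})"
  define B where "B = (\<lambda>n. (\<Sum>c\<in>UNIV. \<integral>\<^sup>+ w. ennreal (sqrt (real (K n) *
                    condvar (feat P SX) (grad l th) (fpred (A n) n (K n) 1 w)
                      (fbar (train_space R P n) (fpred (A n) n (K n) 1)) c)) \<partial>(train_space R P n)))"
  have bnd: "emeasure (full_space R P SX (N n) n) (E n) \<le> ennreal (1 / e) * B n" for n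
  proof -
    interpret L3 l th P SX R "A n" n "K n" "N n"
      using P setsP R Gmeas Ameas[of n] by (simp add: L3_def)
    have "ennreal e * emeasure (full_space R P SX (N n) n) (E n) \<le> B n"
      unfolding E_def B_def full_space_def
      by (rule markov_bound[OF _ e mom_Gf mom_Gfbar]) (use K in blast)
    then have "ennreal (1 / e) * (ennreal e * emeasure (full_space R P SX (N n) n) (E n)) \<le> ennreal (1 / e) * B n"
      by (rule mult_left_mono) simp
    also have "ennreal (1 / e) * (ennreal e * emeasure (full_space R P SX (N n) n) (E n))
        = (ennreal (1 / e) * ennreal e) * emeasure (full_space R P SX (N n) n) (E n)" by (simp add: mult.assoc)
    also have "ennreal (1 / e) * ennreal e = 1" using e by (simp flip: ennreal_mult)
    finally show ?thesis by simp
  qed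
  have B0: "B \<longlonglongrightarrow> 0"
  proof -
    have "(\<lambda>n. B n) \<longlonglongrightarrow> (\<Sum>c\<in>(UNIV::'d set). (0::ennreal))"
      unfolding B_def by (intro tendsto_sum stable)
    then show ?thesis by simp
  qed
  have "(\<lambda>n. ennreal (1 / e) * B n) \<longlonglongrightarrow> ennreal (1 / e) * 0"
    by (rule ennreal_tendsto_cmult[OF _ B0]) simp
  then have "(\<lambda>n. ennreal (1 / e) * B n) \<longlonglongrightarrow> 0" by simp
  then have em: "(\<lambda>n. emeasure (full_space R P SX (N n) n) (E n)) \<longlonglongrightarrow> 0"
    by (rule tendsto_sandwich[rotated 2, OF tendsto_const]) (auto simp: bnd)
  have "(\<lambda>n. enn2real (emeasure (full_space R P SX (N n) n) (E n))) \<longlonglongrightarrow> 0"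
    using tendsto_enn2real[of _ 0] em by simp
  then show "(\<lambda>n. measure (full_space R P SX (N n) n) (E n)) \<longlonglongrightarrow> 0"
    by (simp add: measure_def)
qed



end
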